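(* Let $Q_0,\beta_1,\beta_2,\beta_3,c_1,c_2,c_3,\theta,\pi,\delta,\alpha,\mu$ be positive constants and $u_1\in[0,1]$ a constant. Consider the system \[ \begin{aligned} S' &= Q_0-\beta_m S-\mu S,\\ I_1' &= \beta_m S-(\theta+\mu+\delta)I_1,\\ I_2' &= \theta I_1-(\delta+\mu+\pi)I_2,\\ A' &= \delta I_1+\delta I_2+\pi I_2-(\alpha+\mu)A, \end{aligned} \qquad \beta_m=\frac{(1-u_1)(\beta_1c_1I_1+\beta_2c_2I_2+\beta_3c_3A)}{N},\quad N=S+I_1+I_2+A, \] and define $R_0=\zeta_1+\zeta_2+\zeta_3+\zeta_4$ with \[ \zeta_1=\frac{(1-u_1)\beta_1c_1}{\theta+\delta+\mu},\quad \zeta_2=\frac{(1-u_1)\beta_2c_2\theta}{(\theta+\delta+\mu)(\delta+\mu+\pi)},\quad \zeta_3=\frac{(1-u_1)\beta_3c_3\theta(\delta+\pi)}{(\theta+\delta+\mu)(\delta+\mu+\pi)(\alpha+\mu)},\quad \zeta_4=\frac{(1-u_1)\beta_3c_3\delta}{(\theta+\delta+\mu)(\alpha+\mu)}. \] If $R_0<1$, then the disease-free equilibrium $E_0=(Q_0/\mu,0,0,0)$ is locally asymptotically stable.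
   Context: $S$ denotes susceptibles, $I_1$ unaware infectives, $I_2$ aware infectives, $A$ individuals with AIDS; $N$ is the total population. *)

theory Defs
  imports "HOL-Analysis.Analysis"
begin

type_synonym state = "real \<times> real \<times> real \<times> real"  (* (S, I1, I2, A) *)

text \<open>Right-hand side of the HIV/AIDS model with parameters
  Q0 b1 b2 b3 c1 c2 c3 th p dl al mu u1 (p stands for the paper's pi).\<close>
definition hiv_field ::
  "real \<Rightarrow> real \<Rightarrow> real \<Rightarrow> real \<Rightarrow> real \<Rightarrow> real \<Rightarrow> real \<Rightarrow> real \<Rightarrow> real \<Rightarrow> real \<Rightarrow> real \<Rightarrow> real \<Rightarrow> real
   \<Rightarrow> state \<Rightarrow> state" where
  "hiv_field Q0 b1 b2 b3 c1 c2 c3 th p dl al mu u1 x =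
     (case x of (S, I1, I2, A) \<Rightarrow>
       let N = S + I1 + I2 + A;
           bm = (1 - u1) * (b1 * c1 * I1 + b2 * c2 * I2 + b3 * c3 * A) / N
       in (Q0 - bm * S - mu * S,
           bm * S - (th + mu + dl) * I1,
           th * I1 - (dl + mu + p) * I2,
           dl * I1 + dl * I2 + p * I2 - (al + mu) * A))"

definition is_solution_on :: "(state \<Rightarrow> state) \<Rightarrow> (real \<Rightarrow> state) \<Rightarrow> real set \<Rightarrow> bool" where
  "is_solution_on F x T \<longleftrightarrow> (\<forall>t\<in>T. (x has_vector_derivative F (x t)) (at t within T))"

text \<open>Local asymptotic stability (Lyapunov) of an equilibrium e of x' = F x:
  stability (solutions starting close stay close, on whatever interval [0,T] they exist)
  plus local attractivity (global forward solutions starting close converge to e).\<close>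
definition locally_asymptotically_stable :: "(state \<Rightarrow> state) \<Rightarrow> state \<Rightarrow> bool" where
  "locally_asymptotically_stable F e \<longleftrightarrow>
     F e = 0 \<and>
     (\<forall>\<epsilon>>0. \<exists>\<delta>>0. \<forall>x T. is_solution_on F x {0..T} \<and> dist (x 0) e < \<delta> \<longrightarrow>
          (\<forall>t\<in>{0..T}. dist (x t) e < \<epsilon>)) \<and>
     (\<exists>\<eta>>0. \<forall>x. is_solution_on F x {0..} \<and> dist (x 0) e < \<eta> \<longrightarrow> (x \<longlongrightarrow> e) at_top)"

end

theory Submission
  imports Defs
begin


lemma young_pair:
  fixes c vi vj yi yj :: real
  assumes "vi > 0" "vj > 0" "c \<ge> 0"
  shows "c * yi * yj / vi \<le> c * vj * yi^2 / (2 * vi^2) + c * yj^2 / (2 * vj)"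
proof -
  have "0 \<le> (vj*yi - vi*yj)^2" by simp
  hence h: "2* vi* vj*yi*yj \<le> vj^2*yi^2 + vi^2*yj^2" by (simp add: power2_eq_square algebra_simps)
  have "yi * yj / vi \<le> vj * yi^2 / (2 * vi^2) + yj^2 / (2 * vj)"
    using h assms by (simp add: field_simps power2_eq_square)
  from mult_left_mono[OF this assms(3)] show ?thesis by (simp add: algebra_simps)
qed

lemma metzler_young:
  fixes a11 a12 a13 a21 a22 a23 a31 a32 a33 v1 v2 v3 w1 w2 w3 y1 y2 y3 :: real
  assumes v: "v1 > 0" "v2 > 0" "v3 > 0" and w: "w1 > 0" "w2 > 0" "w3 > 0"
    and a: "a12 \<ge> 0" "a13 \<ge> 0" "a21 \<ge> 0" "a23 \<ge> 0" "a31 \<ge> 0" "a32 \<ge> 0"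
  shows "(w1/v1)*y1*(a11*y1+a12*y2+a13*y3) + (w2/v2)*y2*(a21*y1+a22*y2+a23*y3)
          + (w3/v3)*y3*(a31*y1+a32*y2+a33*y3)
   \<le> (w1*(a11* v1+a12* v2+a13* v3)/(2* v1^2) + (w1*a11+w2*a21+w3*a31)/(2* v1)) * y1^2
     + (w2*(a21* v1+a22* v2+a23* v3)/(2* v2^2) + (w1*a12+w2*a22+w3*a32)/(2* v2)) * y2^2
     + (w3*(a31* v1+a32* v2+a33* v3)/(2* v3^2) + (w1*a13+w2*a23+w3*a33)/(2* v3)) * y3^2"
proof -
  have y12: "(w1*a12) * y1 * y2 / v1 \<le> (w1*a12) * v2 * y1^2 / (2 * v1^2) + (w1*a12) * y2^2 / (2 * v2)"
    by (rule young_pair) (use v w a in auto)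
  have y13: "(w1*a13) * y1 * y3 / v1 \<le> (w1*a13) * v3 * y1^2 / (2 * v1^2) + (w1*a13) * y3^2 / (2 * v3)"
    by (rule young_pair) (use v w a in auto)
  have y21: "(w2*a21) * y2 * y1 / v2 \<le> (w2*a21) * v1 * y2^2 / (2 * v2^2) + (w2*a21) * y1^2 / (2 * v1)"
    by (rule young_pair) (use v w a in auto)
  have y23: "(w2*a23) * y2 * y3 / v2 \<le> (w2*a23) * v3 * y2^2 / (2 * v2^2) + (w2*a23) * y3^2 / (2 * v3)"
    by (rule young_pair) (use v w a in auto)
  have y31: "(w3*a31) * y3 * y1 / v3 \<le> (w3*a31) * v1 * y3^2 / (2 * v3^2) + (w3*a31) * y1^2 / (2 * v1)"
    by (rule young_pair) (use v w a in auto)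
  have y32: "(w3*a32) * y3 * y2 / v3 \<le> (w3*a32) * v2 * y3^2 / (2 * v3^2) + (w3*a32) * y2^2 / (2 * v2)"
    by (rule young_pair) (use v w a in auto)
  have L: "(w1/v1)*y1*(a11*y1+a12*y2+a13*y3) + (w2/v2)*y2*(a21*y1+a22*y2+a23*y3)
          + (w3/v3)*y3*(a31*y1+a32*y2+a33*y3)
       = w1*a11*y1^2/v1 + w2*a22*y2^2/v2 + w3*a33*y3^2/v3
         + (w1*a12) * y1 * y2 / v1 + (w1*a13) * y1 * y3 / v1 + (w2*a21) * y2 * y1 / v2
         + (w2*a23) * y2 * y3 / v2 + (w3*a31) * y3 * y1 / v3 + (w3*a32) * y3 * y2 / v3"
    using v by (simp add: field_simps power2_eq_square)
  have R: "(w1*(a11* v1+a12* v2+a13* v3)/(2* v1^2) + (w1*a11+w2*a21+w3*a31)/(2* v1)) * y1^2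
     + (w2*(a21* v1+a22* v2+a23* v3)/(2* v2^2) + (w1*a12+w2*a22+w3*a32)/(2* v2)) * y2^2
     + (w3*(a31* v1+a32* v2+a33* v3)/(2* v3^2) + (w1*a13+w2*a23+w3*a33)/(2* v3)) * y3^2
     = w1*a11*y1^2/v1 + w2*a22*y2^2/v2 + w3*a33*y3^2/v3
      + ((w1*a12) * v2 * y1^2 / (2 * v1^2) + (w1*a12) * y2^2 / (2 * v2))
      + ((w1*a13) * v3 * y1^2 / (2 * v1^2) + (w1*a13) * y3^2 / (2 * v3))
      + ((w2*a21) * v1 * y2^2 / (2 * v2^2) + (w2*a21) * y1^2 / (2 * v1))
      + ((w2*a23) * v3 * y2^2 / (2 * v2^2) + (w2*a23) * y3^2 / (2 * v3))
      + ((w3*a31) * v1 * y3^2 / (2 * v3^2) + (w3*a31) * y1^2 / (2 * v1))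
      + ((w3*a32) * v2 * y3^2 / (2 * v3^2) + (w3*a32) * y2^2 / (2 * v2))"
    using v by (simp add: field_simps power2_eq_square)
  show ?thesis unfolding L R using y12 y13 y21 y23 y31 y32 by linarith
qed




lemma decay_lemma:
  fixes g D :: "real \<Rightarrow> real" and T B c :: real
  assumes der: "\<And>t. t \<in> {0..T} \<Longrightarrow> (g has_real_derivative D t) (at t within {0..T})"
    and dec: "\<And>t. t \<in> {0..T} \<Longrightarrow> g t < B \<Longrightarrow> D t \<le> - c * g t"
    and c: "c \<ge> 0" and g0: "g 0 < B" "g 0 \<ge> 0"
  shows "\<forall>t\<in>{0..T}. g t \<le> g 0 * exp (- c * t) \<and> g t < B"
proof -
  define h where "h t = g t * exp (c * t)" for t
  have hder: "(h has_real_derivative (D t + c * g t) * exp (c * t)) (at t within {0..T})"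
    if "t \<in> {0..T}" for t
    unfolding h_def
    by (rule derivative_eq_intros der[OF that] refl | simp add: algebra_simps)+
  have gcont: "continuous_on {0..T} g"
    using der by (meson DERIV_continuous continuous_on_eq_continuous_within)
  have hcont: "continuous_on {0..T} h"
    unfolding h_def by (intro continuous_intros gcont)
  have claim1: "g t \<le> g 0 * exp (- c * t)"
    if t: "t \<in> {0..T}" and below: "\<And>s. s \<in> {0..T} \<Longrightarrow> s < t \<Longrightarrow> g s < B" for t
  proof -
    have "h t \<le> h 0"
    proof (rule DERIV_nonpos_imp_decreasing_open[of 0 t h])
      show "0 \<le> t" using t by auto
      show "continuous_on {0..t} h" by (rule continuous_on_subset[OF hcont]) (use t in auto)
      fix x assume x: "0 < x" "x < t"
      hence xi: "x \<in> interior {0..T}" using t by auto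
      hence xT: "x \<in> {0..T}" using interior_subset by blast
      have "(h has_real_derivative (D x + c * g x) * exp (c * x)) (at x)"
        using hder[OF xT] at_within_interior[OF xi] by simp
      moreover have "(D x + c * g x) * exp (c * x) \<le> 0"
        using dec[OF xT below[OF xT x(2)]] by (simp add: mult_nonpos_nonneg)
      ultimately show "\<exists>y. (h has_real_derivative y) (at x) \<and> y \<le> 0" by blast
    qed
    thus ?thesis unfolding h_def by (simp add: field_simps exp_minus)
  qed
  have allB: "\<forall>t\<in>{0..T}. g t < B"
  proof (rule ccontr)
    assume nB: "\<not> (\<forall>t\<in>{0..T}. g t < B)"
    define Z where "Z = {0..T} \<inter> g -` {B..}"
    have Zne: "Z \<noteq> {}" using nB unfolding Z_def by force
    have Zcl: "closed Z" unfolding Z_def by (rule continuous_closed_preimage[OF gcont]) auto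
    have Zbdd: "bdd_below Z" unfolding Z_def by (rule bdd_belowI[of _ 0]) auto
    define ts where "ts = Inf Z"
    have tsZ: "ts \<in> Z" unfolding ts_def by (rule closed_contains_Inf[OF Zne Zbdd Zcl])
    have "g s < B" if "s \<in> {0..T}" "s < ts" for s
    proof (rule ccontr)
      assume "\<not> g s < B"
      hence "s \<in> Z" using that unfolding Z_def by auto
      hence "ts \<le> s" unfolding ts_def by (rule cInf_lower[OF _ Zbdd])
      thus False using that by simp
    qed
    hence "g ts \<le> g 0 * exp (- c * ts)" using claim1 tsZ unfolding Z_def by blast
    also have "\<dots> \<le> g 0"
    proof -
      have "exp (- c * ts) \<le> 1" using c tsZ unfolding Z_def by auto
      thus ?thesis using g0 mult_left_le_one_le[of "g 0" "exp (- c * ts)"] by (simp add: mult.commute)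
    qed
    finally show False using tsZ g0 unfolding Z_def by auto
  qed
  show ?thesis using claim1 allB by blast
qed




locale hivp =
  fixes Q0 b1 b2 b3 c1 c2 c3 th p dl al mu u1 :: real
  assumes pos: "Q0 > 0" "b1 > 0" "b2 > 0" "b3 > 0" "c1 > 0" "c2 > 0" "c3 > 0"
      "th > 0" "p > 0" "dl > 0" "al > 0" "mu > 0"
    and u1: "0 \<le> u1" "u1 \<le> 1"
    and R0: "(1 - u1) * b1 * c1 / (th + dl + mu)
           + (1 - u1) * b2 * c2 * th / ((th + dl + mu) * (dl + mu + p))
           + (1 - u1) * b3 * c3 * th * (dl + p) / ((th + dl + mu) * (dl + mu + p) * (al + mu))
           + (1 - u1) * b3 * c3 * dl / ((th + dl + mu) * (al + mu)) < 1"
begin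

definition "S0 = Q0 / mu"
definition "f1 = (1 - u1) * b1 * c1"
definition "f2 = (1 - u1) * b2 * c2"
definition "f3 = (1 - u1) * b3 * c3"
definition "k1 = th + dl + mu"
definition "k2 = dl + mu + p"
definition "k3 = al + mu"
definition "q = dl + p"
definition "R = f1/k1 + f2* th/(k1* k2) + f3* th* q/(k1* k2* k3) + f3* dl/(k1* k3)"
definition "lam = 1 + (1 - R)/4"
definition "v2 = lam* th/k2"
definition "v3 = lam*(dl + lam* q* th/k2)/k3"
definition "G = th/k2 + th* q/(k2* k3) + dl/k3"
definition "ee = (k1 - lam^2*(k1* R))/(2* lam^2* G)"
definition "w3 = lam*(f3+ee)/k3"
definition "w2 = lam*(f2 + q* w3 + ee)/k2"
definition "av1 = (f1-k1)*1 + f2* v2 + f3* v3"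
definition "av2 = th*1 + (-k2)* v2 + 0* v3"
definition "av3 = dl*1 + q* v2 + (-k3)* v3"
definition "wa1 = 1*(f1-k1) + w2* th + w3* dl"
definition "wa2 = 1* f2 + w2*(-k2) + w3* q"
definition "wa3 = 1* f3 + w2*0 + w3*(-k3)"
definition "cf1 = 1* av1/(2*1^2) + wa1/(2*1)"
definition "cf2 = w2* av2/(2* v2^2) + wa2/(2* v2)"
definition "cf3 = w3* av3/(2* v3^2) + wa3/(2* v3)"
definition "d2 = w2/v2"
definition "d3 = w3/v3"
definition "kap = min (-cf1) (min (-cf2) (-cf3))"

lemma basic_pos: "S0 > 0" "f1 \<ge> 0" "f2 \<ge> 0" "f3 \<ge> 0" "k1 > 0" "k2 > 0" "k3 > 0" "q > 0"
  using pos u1 by (auto simp: S0_def f1_def f2_def f3_def k1_def k2_def k3_def q_def)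

lemma R_eq: "R = (1 - u1) * b1 * c1 / (th + dl + mu)
           + (1 - u1) * b2 * c2 * th / ((th + dl + mu) * (dl + mu + p))
           + (1 - u1) * b3 * c3 * th * (dl + p) / ((th + dl + mu) * (dl + mu + p) * (al + mu))
           + (1 - u1) * b3 * c3 * dl / ((th + dl + mu) * (al + mu))"
  unfolding R_def f1_def f2_def f3_def k1_def k2_def k3_def q_def by simp

lemma kR: "k1 * R = f1 + f2* th/k2 + f3* th* q/(k2* k3) + f3* dl/k3"
  unfolding R_def using basic_pos by (simp add: field_simps)

lemma R_lt: "R < 1" using R0 R_eq by simp

lemma R_nn: "R \<ge> 0"
  using basic_pos pos unfolding R_def by (intro divide_nonneg_pos add_nonneg_nonneg mult_nonneg_nonneg mult_pos_pos) auto

lemma lam_props: "lam > 1" "lam^2 * R < 1" "lam \<le> lam^2"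
proof -
  show "lam > 1" using R_lt unfolding lam_def by simp
  define t where "t = 1 - R"
  have t: "0 < t" "t \<le> 1" using R_lt R_nn unfolding t_def by auto
  have "lam^2 * R = (1 + t/4)^2 * (1 - t)" unfolding lam_def t_def by simp
  also have "\<dots> = 1 - t/2 - t^2/2 + t^2/16 - t^3/16" by (simp add: power2_eq_square power3_eq_cube field_simps)
  also have "\<dots> < 1"
  proof -
    have "t^2 \<ge> 0" "t^3 \<ge> 0" using t by auto
    thus ?thesis using t by linarith
  qed
  finally show "lam^2 * R < 1" .
  show "lam \<le> lam^2" using \<open>lam > 1\<close> by (simp add: power2_eq_square)
qed

lemma G_pos: "G > 0" using basic_pos pos unfolding G_def by (intro add_pos_pos divide_pos_pos mult_pos_pos) auto

lemma ee_pos: "ee > 0"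
proof -
  have "lam^2 * (k1 * R) < k1" using lam_props(2) basic_pos by (metis mult.assoc mult.left_commute mult_less_cancel_left_pos mult.right_neutral)
  thus ?thesis unfolding ee_def using G_pos lam_props by (intro divide_pos_pos) auto
qed

lemma vw_pos: "v2 > 0" "v3 > 0" "w3 > 0" "w2 > 0"
proof -
  show "v2 > 0" "v3 > 0" unfolding v2_def v3_def using basic_pos pos lam_props
    by (auto intro!: divide_pos_pos mult_pos_pos add_pos_pos)
  show w3: "w3 > 0" unfolding w3_def using basic_pos ee_pos lam_props
    by (auto intro!: divide_pos_pos mult_pos_pos add_nonneg_pos)
  show "w2 > 0" unfolding w2_def using basic_pos ee_pos lam_props w3
    by (auto intro!: divide_pos_pos mult_pos_pos add_nonneg_pos)
qed

lemma av_neg: "av1 < 0" "av2 < 0" "av3 < 0"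
proof -
  have l: "lam > 1" "lam \<le> lam^2" using lam_props by auto
  have a: "f2 * v2 = lam * (f2* th/k2)" unfolding v2_def by simp
  have b: "f3 * v3 = lam * (f3* dl/k3) + lam^2 * (f3* th* q/(k2* k3))"
    unfolding v3_def using basic_pos by (simp add: field_simps power2_eq_square)
  have n1: "f2* th/k2 \<ge> 0" "f3* dl/k3 \<ge> 0" "f3* th* q/(k2* k3) \<ge> 0" "f1 \<ge> 0"
    using basic_pos pos by auto
  have "lam * (f2* th/k2) \<le> lam^2 * (f2* th/k2)" using l n1 by (intro mult_right_mono) auto
  moreover have "lam * (f3* dl/k3) \<le> lam^2 * (f3* dl/k3)" using l n1 by (intro mult_right_mono) auto
  moreover have "f1 \<le> lam^2 * f1" using l n1 mult_right_mono[of 1 "lam^2" f1] by auto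
  ultimately have "av1 \<le> lam^2 * (k1 * R) - k1"
    unfolding av1_def kR a b by (simp add: algebra_simps)
  moreover have "lam^2 * (k1 * R) < k1" using lam_props(2) basic_pos
    by (metis mult.assoc mult.left_commute mult_less_cancel_left_pos mult.right_neutral)
  ultimately show "av1 < 0" by simp
  have "k2 * v2 = lam * th" unfolding v2_def using basic_pos by simp
  thus "av2 < 0" unfolding av2_def using l pos by (simp add: algebra_simps)
  have "k3 * v3 = lam*(dl + lam* q* th/k2)" unfolding v3_def using basic_pos by simp
  hence "av3 = (1 - lam) * dl + (lam - lam^2) * (q* th/k2)"
    unfolding av3_def v2_def by (simp add: algebra_simps power2_eq_square)
  moreover have "(1 - lam) * dl < 0" using l pos by (simp add: mult_neg_pos)
  moreover have "(lam - lam^2) * (q* th/k2) \<le> 0" using l basic_pos pos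
    by (intro mult_nonpos_nonneg) auto
  ultimately show "av3 < 0" by simp
qed

lemma wa_neg: "wa1 < 0" "wa2 < 0" "wa3 < 0"
proof -
  have l: "lam > 1" "lam \<le> lam^2" using lam_props by auto
  have e: "ee > 0" using ee_pos .
  have id: "w2* th + w3* dl = lam*(f2* th/k2) + lam^2*(f3* th* q/(k2* k3)) + lam*(f3* dl/k3)
     + ee * (lam*(th/k2) + lam^2*(th* q/(k2* k3)) + lam*(dl/k3))"
    unfolding w2_def w3_def using basic_pos by (simp add: field_simps power2_eq_square)
  have n1: "f2* th/k2 \<ge> 0" "f3* dl/k3 \<ge> 0" "th/k2 \<ge> 0" "dl/k3 \<ge> 0" "f1 \<ge> 0"
    using basic_pos pos by auto
  have "lam * (f2* th/k2) \<le> lam^2 * (f2* th/k2)" using l n1 by (intro mult_right_mono) auto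
  moreover have "lam * (f3* dl/k3) \<le> lam^2 * (f3* dl/k3)" using l n1 by (intro mult_right_mono) auto
  moreover have "lam * (th/k2) \<le> lam^2 * (th/k2)" using l n1 by (intro mult_right_mono) auto
  moreover have "lam * (dl/k3) \<le> lam^2 * (dl/k3)" using l n1 by (intro mult_right_mono) auto
  moreover have "f1 \<le> lam^2 * f1" using l n1 mult_right_mono[of 1 "lam^2" f1] by auto
  ultimately have "ee * (lam*(th/k2) + lam^2*(th* q/(k2* k3)) + lam*(dl/k3)) \<le> ee * (lam^2 * G)"
    using e unfolding G_def by (intro mult_left_mono) (auto simp: algebra_simps)
  moreover have "ee * (lam^2 * G) = (k1 - lam^2*(k1* R))/2"
    unfolding ee_def using G_pos lam_props by (simp add: field_simps)
  moreover have "lam * (f2* th/k2) + lam^2*(f3* th* q/(k2* k3)) + lam*(f3* dl/k3) \<le> lam^2 * (k1* R - f1)"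
    using \<open>lam * (f2* th/k2) \<le> lam^2 * (f2* th/k2)\<close> \<open>lam * (f3* dl/k3) \<le> lam^2 * (f3* dl/k3)\<close>
    unfolding kR by (simp add: algebra_simps)
  moreover have "lam^2 * (k1 * R) < k1" using lam_props(2) basic_pos
    by (metis mult.assoc mult.left_commute mult_less_cancel_left_pos mult.right_neutral)
  ultimately show "wa1 < 0" unfolding wa1_def using id \<open>f1 \<le> lam^2 * f1\<close>
    by (simp add: algebra_simps)
  have "k2 * w2 = lam*(f2 + q* w3 + ee)" unfolding w2_def using basic_pos by simp
  hence "wa2 = (1 - lam) * (f2 + q* w3) - lam * ee" unfolding wa2_def by (simp add: algebra_simps)
  moreover have "(1 - lam) * (f2 + q* w3) \<le> 0" using l basic_pos vw_pos
    by (intro mult_nonpos_nonneg) auto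
  moreover have "lam * ee > 0" using l e by simp
  ultimately show "wa2 < 0" by simp
  have "k3 * w3 = lam*(f3 + ee)" unfolding w3_def using basic_pos by simp
  hence "wa3 = (1 - lam) * f3 - lam * ee" unfolding wa3_def by (simp add: algebra_simps)
  moreover have "(1 - lam) * f3 \<le> 0" using l basic_pos by (intro mult_nonpos_nonneg) auto
  moreover have "lam * ee > 0" using l e by simp
  ultimately show "wa3 < 0" by simp
qed

lemma cf_neg: "cf1 < 0" "cf2 < 0" "cf3 < 0"
proof -
  show "cf1 < 0" unfolding cf1_def using av_neg wa_neg by simp
  have "w2* av2/(2* v2^2) < 0" using vw_pos av_neg by (intro divide_neg_pos mult_pos_neg) auto
  moreover have "wa2/(2* v2) < 0" using vw_pos wa_neg by (intro divide_neg_pos) auto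
  ultimately show "cf2 < 0" unfolding cf2_def by simp
  have "w3* av3/(2* v3^2) < 0" using vw_pos av_neg by (intro divide_neg_pos mult_pos_neg) auto
  moreover have "wa3/(2* v3) < 0" using vw_pos wa_neg by (intro divide_neg_pos) auto
  ultimately show "cf3 < 0" unfolding cf3_def by simp
qed

lemma kap_pos: "kap > 0" unfolding kap_def using cf_neg by simp

lemma d_pos: "d2 > 0" "d3 > 0" unfolding d2_def d3_def using vw_pos by auto

end


context hivp begin

definition "F2 = f1^2 + f2^2 + f3^2"
definition "K = kap* mu/(24*(F2+1))"
definition "tau = kap/(2*(1+3* F2))"
definition "rho = min (S0/8) (tau* S0/6)"
definition "Wf z = K*(fst z - S0)^2 + (fst (snd z))^2 + d2*(fst (snd (snd z)))^2 + d3*(snd (snd (snd z)))^2"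
definition "DW z X = 2* K*(fst z - S0)* fst X + 2* fst(snd z)* fst(snd X)
   + 2* d2* fst(snd(snd z))* fst(snd(snd X)) + 2* d3* snd(snd(snd z))* snd(snd(snd X))"
definition "cc = min mu (kap/(1+d2+d3))"

lemma consts_pos: "F2 \<ge> 0" "K > 0" "tau > 0" "rho > 0" "cc > 0"
proof -
  show F: "F2 \<ge> 0" unfolding F2_def by simp
  show "K > 0" unfolding K_def using kap_pos pos F by (intro divide_pos_pos mult_pos_pos) auto
  show t: "tau > 0" unfolding tau_def using kap_pos F by (intro divide_pos_pos) auto
  have "S0/8 > 0" "tau * S0/6 > 0" using t basic_pos by auto
  thus "rho > 0" unfolding rho_def by (simp only: min_def) auto
  have "1 + d2 + d3 > 0" using d_pos by linarith
  hence "kap/(1+d2+d3) > 0" using kap_pos by (rule divide_pos_pos[rotated])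
  thus "cc > 0" unfolding cc_def using pos(12) by (simp only: min_def) (auto)
qed

lemma core:
  assumes "\<bar>S - S0\<bar> < rho" "\<bar>I1\<bar> < rho" "\<bar>I2\<bar> < rho" "\<bar>A\<bar> < rho"
  shows "DW (S,I1,I2,A) (hiv_field Q0 b1 b2 b3 c1 c2 c3 th p dl al mu u1 (S,I1,I2,A))
           \<le> - cc * Wf (S,I1,I2,A)"
proof -
  define s where "s = S - S0"
  define N where "N = S + I1 + I2 + A"
  define Phi where "Phi = f1* I1 + f2* I2 + f3* A"
  define r where "r = S / N"
  define Y where "Y = I1^2 + I2^2 + A^2"
  have rho1: "rho \<le> S0/8" "rho \<le> tau* S0/6" unfolding rho_def by auto
  have S0p: "S0 > 0" using basic_pos by simp
  have Nlow: "N \<ge> S0/2" unfolding N_def using assms rho1 by linarith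
  have Np: "N > 0" using Nlow S0p by linarith
  have Sp: "S > 0" using assms rho1 S0p by linarith
  have Q0eq: "Q0 = mu * S0" unfolding S0_def using pos by simp
  have phi_eq: "(1 - u1) * (b1 * c1 * I1 + b2 * c2 * I2 + b3 * c3 * A) = Phi"
    unfolding Phi_def f1_def f2_def f3_def by (simp add: algebra_simps)
  have bmS: "(1 - u1) * (b1 * c1 * I1 + b2 * c2 * I2 + b3 * c3 * A) / (S + I1 + I2 + A) * S = r * Phi"
    unfolding phi_eq r_def N_def by simp
  have field0: "hiv_field Q0 b1 b2 b3 c1 c2 c3 th p dl al mu u1 (S,I1,I2,A)
     = (Q0 - (1 - u1) * (b1 * c1 * I1 + b2 * c2 * I2 + b3 * c3 * A) / (S + I1 + I2 + A) * S - mu * S,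
        (1 - u1) * (b1 * c1 * I1 + b2 * c2 * I2 + b3 * c3 * A) / (S + I1 + I2 + A) * S - (th + mu + dl) * I1,
        th * I1 - (dl + mu + p) * I2,
        dl * I1 + dl * I2 + p * I2 - (al + mu) * A)"
    unfolding hiv_field_def Let_def prod.case by (rule refl)
  have mus: "mu * s = mu * S - mu * S0" unfolding s_def by (simp add: algebra_simps)
  have e1: "Q0 - r * Phi - mu * S = -mu* s - r* Phi" using Q0eq mus by linarith
  have e2: "(th + mu + dl) = k1" "dl + mu + p = k2" "al + mu = k3" unfolding k1_def k2_def k3_def by simp_all
  have e3: "dl * I1 + dl * I2 + p * I2 - k3 * A = dl* I1 + q* I2 - k3* A" unfolding q_def by (simp add: algebra_simps)
  have field: "hiv_field Q0 b1 b2 b3 c1 c2 c3 th p dl al mu u1 (S,I1,I2,A)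
     = (-mu* s - r* Phi, r* Phi - k1* I1, th* I1 - k2* I2, dl* I1 + q* I2 - k3* A)"
    unfolding field0 bmS e1 e2 e3 by simp
  have r1: "r - 1 = - (I1 + I2 + A) / N" unfolding r_def N_def using Np N_def
    by (simp add: field_simps)
  have "\<bar>I1 + I2 + A\<bar> \<le> 3 * rho" using assms by linarith
  hence "\<bar>r - 1\<bar> \<le> 3 * rho / N" unfolding r1 using Np by (simp add: divide_right_mono)
  also have "\<dots> \<le> 3 * rho / (S0/2)" using Nlow S0p consts_pos
    by (intro divide_left_mono) auto
  also have "\<dots> = 6 * rho / S0" by simp
  finally have r1b: "\<bar>r - 1\<bar> \<le> 6 * rho / S0" .
  have rtau: "\<bar>r - 1\<bar> \<le> tau"
  proof -
    have "6 * rho / S0 \<le> tau" using rho1 S0p by (simp add: field_simps)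
    thus ?thesis using r1b by linarith
  qed
  have r2: "\<bar>r\<bar> \<le> 2"
  proof -
    have "6 * rho / S0 \<le> 1" using rho1 S0p by (simp add: field_simps)
    thus ?thesis using r1b by linarith
  qed
  have young: "(1/1)* I1*((f1-k1)* I1+f2* I2+f3* A) + (w2/v2)* I2*(th* I1+(-k2)* I2+0* A)
          + (w3/v3)* A*(dl* I1+q* I2+(-k3)* A) \<le> cf1 * I1^2 + cf2 * I2^2 + cf3 * A^2"
    using metzler_young[where ?a11.0="f1-k1" and ?a12.0=f2 and ?a13.0=f3 and ?a21.0=th and ?a22.0="-k2" and ?a23.0=0
        and ?a31.0=dl and ?a32.0=q and ?a33.0="-k3" and ?v1.0=1 and ?v2.0=v2 and ?v3.0=v3 and ?w1.0=1 and ?w2.0=w2 and ?w3.0=w3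
        and ?y1.0=I1 and ?y2.0=I2 and ?y3.0=A] vw_pos basic_pos pos
    unfolding cf1_def cf2_def cf3_def av1_def av2_def av3_def wa1_def wa2_def wa3_def
    by simp
  have "cf1 * I1^2 + cf2 * I2^2 + cf3 * A^2 \<le> (-kap) * I1^2 + (-kap) * I2^2 + (-kap) * A^2"
    using cf_neg unfolding kap_def by (intro add_mono mult_right_mono) auto
  hence young2: "I1*((f1-k1)* I1+f2* I2+f3* A) + d2* I2*(th* I1-k2* I2) + d3* A*(dl* I1+q* I2-k3* A) \<le> - kap * Y"
    using young unfolding d2_def d3_def Y_def by (simp add: algebra_simps)
  have phi2: "Phi^2 \<le> 3 * F2 * Y"
  proof -
    have "Phi^2 \<le> 3 * ((f1* I1)^2 + (f2* I2)^2 + (f3* A)^2)"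
    proof -
      have "0 \<le> (f1* I1 - f2* I2)^2 + (f1* I1 - f3* A)^2 + (f2* I2 - f3* A)^2" by simp
      thus ?thesis unfolding Phi_def by (simp add: power2_eq_square algebra_simps)
    qed
    also have "\<dots> \<le> 3 * (F2 * I1^2 + F2 * I2^2 + F2 * A^2)"
      unfolding F2_def by (simp add: power_mult_distrib algebra_simps)
    finally show ?thesis unfolding Y_def by (simp add: algebra_simps)
  qed
  have Kmu: "K * 12 * F2 / mu \<le> kap / 2"
  proof -
    have F1: "F2 + 1 > 0" using consts_pos by linarith
    have "K * 12 * F2 / mu = kap * F2 / (2 * (F2 + 1))" unfolding K_def using pos(12) F1
      by (simp add: divide_simps)
    also have "\<dots> \<le> kap * (F2 + 1) / (2 * (F2 + 1))" using kap_pos consts_pos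
      by (intro divide_right_mono mult_left_mono) auto
    also have "\<dots> = kap / 2" using F1 by (simp add: divide_simps)
    finally show ?thesis .
  qed
  have Ynn: "Y \<ge> 0" unfolding Y_def by simp
  have t1: "- 2* K* s*(r* Phi) \<le> K* mu* s^2 + kap/2 * Y"
  proof -
    have "0 \<le> K * (mu* s + r* Phi)^2 / mu" using consts_pos pos by simp
    hence "- 2* K* s*(r* Phi) \<le> K* mu* s^2 + K*(r^2* Phi^2)/mu"
      using pos by (simp add: power2_eq_square field_simps)
    also have "K*(r^2* Phi^2)/mu \<le> K*(4*(3* F2* Y))/mu"
    proof -
      have "r^2 \<le> 4" using r2 abs_le_square_iff[of r 2] by simp
      hence "r^2* Phi^2 \<le> 4*(3* F2* Y)" using phi2 by (intro mult_mono) auto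
      thus ?thesis using consts_pos pos by (intro divide_right_mono mult_left_mono) auto
    qed
    also have "K*(4*(3* F2* Y))/mu = (K * 12 * F2 / mu) * Y" by simp
    also have "\<dots> \<le> kap/2 * Y" using Kmu Ynn by (rule mult_right_mono)
    finally show ?thesis by simp
  qed
  have t2: "2* I1*((r-1)* Phi) \<le> kap/2 * Y"
  proof -
    have "2* I1*((r-1)* Phi) \<le> \<bar>r-1\<bar> * (I1^2 + Phi^2)"
    proof -
      have q1: "0 \<le> (I1 - Phi)^2" "0 \<le> (I1 + Phi)^2" by simp_all
      have a1: "2* I1* Phi \<le> I1^2 + Phi^2" using q1(1) by (simp add: power2_eq_square algebra_simps)
      have a2: "-(2* I1* Phi) \<le> I1^2 + Phi^2" using q1(2) by (simp add: power2_eq_square algebra_simps)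
      have eq: "2* I1*((r-1)* Phi) = (r-1) * (2* I1* Phi)" by (simp add: algebra_simps)
      show ?thesis
      proof (cases "r - 1 \<ge> 0")
        case True
        thus ?thesis unfolding eq using mult_left_mono[OF a1 True] by simp
      next
        case False
        hence ab: "\<bar>r-1\<bar> = -(r-1)" and nn: "-(r-1) \<ge> 0" by auto
        have "(r-1) * (2* I1* Phi) = -(r-1) * (-(2* I1* Phi))" by (simp add: algebra_simps)
        also have "\<dots> \<le> -(r-1) * (I1^2 + Phi^2)" by (rule mult_left_mono[OF a2 nn])
        also have "\<dots> = \<bar>r-1\<bar> * (I1^2 + Phi^2)" using ab by simp
        finally show ?thesis unfolding eq .
      qed
    qed
    also have "\<dots> \<le> tau * (Y + 3* F2* Y)"
    proof (rule mult_mono)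
      show "I1^2 + Phi^2 \<le> Y + 3* F2* Y" using phi2 unfolding Y_def by (simp add: add_increasing)
    qed (use rtau consts_pos Ynn in auto)
    also have "\<dots> = kap/2 * Y" unfolding tau_def using consts_pos by (simp add: field_simps)
    finally show ?thesis .
  qed
  have DWeq: "DW (S,I1,I2,A) (hiv_field Q0 b1 b2 b3 c1 c2 c3 th p dl al mu u1 (S,I1,I2,A))
     = -2* K* mu* s^2 + (- 2* K* s*(r* Phi)) + 2*(I1*((f1-k1)* I1+f2* I2+f3* A) + d2* I2*(th* I1-k2* I2) + d3* A*(dl* I1+q* I2-k3* A))
       + 2* I1*((r-1)* Phi)"
  proof -
    have Ss: "S - S0 = s" unfolding s_def by simp
    show ?thesis unfolding DW_def field by (simp only: fst_conv snd_conv Ss) (simp add: Phi_def power2_eq_square algebra_simps)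
  qed
  have DWb: "DW (S,I1,I2,A) (hiv_field Q0 b1 b2 b3 c1 c2 c3 th p dl al mu u1 (S,I1,I2,A))
     \<le> - (K* mu* s^2) - kap * Y"
  proof -
    have "-2* K* mu* s^2 + (- 2* K* s*(r* Phi)) + 2*(I1*((f1-k1)* I1+f2* I2+f3* A) + d2* I2*(th* I1-k2* I2) + d3* A*(dl* I1+q* I2-k3* A))
       + 2* I1*((r-1)* Phi) \<le> -2* K* mu* s^2 + (K* mu* s^2 + kap/2 * Y) + 2*(- kap * Y) + kap/2 * Y"
      by (intro add_mono order_refl t1 t2 mult_left_mono young2) auto
    also have "\<dots> = - (K* mu* s^2) - kap * Y" by (simp add: algebra_simps)
    finally show ?thesis unfolding DWeq .
  qed
  have W1: "cc * (K* s^2) \<le> mu * (K* s^2)" unfolding cc_def using consts_pos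
    by (intro mult_right_mono) auto
  have W2: "I1^2 + d2* I2^2 + d3* A^2 \<le> (1+d2+d3) * Y"
  proof -
    have "d2* I2^2 \<le> d2 * Y" "d3* A^2 \<le> d3 * Y" "I1^2 \<le> Y" using d_pos unfolding Y_def
      by (auto intro!: mult_left_mono)
    thus ?thesis by (simp add: algebra_simps)
  qed
  have W3: "cc * (I1^2 + d2* I2^2 + d3* A^2) \<le> kap * Y"
  proof -
    have "cc * (I1^2 + d2* I2^2 + d3* A^2) \<le> (kap/(1+d2+d3)) * ((1+d2+d3) * Y)"
      unfolding cc_def using W2 consts_pos d_pos kap_pos
      by (intro mult_mono) (auto simp: add_nonneg_nonneg)
    also have "\<dots> = kap * Y" using d_pos by simp
    finally show ?thesis .
  qed
  have "Wf (S,I1,I2,A) = K* s^2 + (I1^2 + d2* I2^2 + d3* A^2)" unfolding Wf_def s_def by simp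
  hence "cc * Wf (S,I1,I2,A) \<le> K* mu* s^2 + kap * Y" using W1 W3 by (simp add: algebra_simps)
  thus ?thesis using DWb by linarith
qed

end



lemma vd_fst: "(x has_vector_derivative X) F \<Longrightarrow> ((\<lambda>t. fst (x t)) has_vector_derivative fst X) F"
  unfolding has_vector_derivative_def by (drule has_derivative_fst) simp

lemma vd_snd: "(x has_vector_derivative X) F \<Longrightarrow> ((\<lambda>t. snd (x t)) has_vector_derivative snd X) F"
  unfolding has_vector_derivative_def by (drule has_derivative_snd) simp

lemma exp_decay_lim:
  assumes c: "(c::real) > 0"
  shows "((\<lambda>t. exp (- c * t)) \<longlongrightarrow> 0) at_top"
proof -
  have "LIM t at_top. c * t :> at_top"
    by (rule filterlim_tendsto_pos_mult_at_top[OF tendsto_const c filterlim_ident])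
  hence "LIM t at_top. - (c * t) :> at_bot" unfolding filterlim_uminus_at_bot by simp
  from filterlim_compose[OF exp_at_bot this] show ?thesis by simp
qed

context hivp begin

definition "nsq z = (fst z - S0)^2 + (fst (snd z))^2 + (fst (snd (snd z)))^2 + (snd (snd (snd z)))^2"
definition "mlow = min K (min 1 (min d2 d3))"
definition "Mup = K + 1 + d2 + d3"

lemma dist_e: "dist z (S0, 0, 0, 0) = sqrt (nsq z)"
  unfolding nsq_def
  by (cases z) (auto simp: dist_Pair_Pair dist_real_def)

lemma nsq_nn: "nsq z \<ge> 0" unfolding nsq_def by simp

lemma m_pos: "mlow > 0" "Mup > 0"
  unfolding mlow_def Mup_def using consts_pos d_pos by auto

lemma W_bounds: "mlow * nsq z \<le> Wf z" "Wf z \<le> Mup * nsq z"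
proof -
  obtain a b c d where z: "z = (a,b,c,d)" by (cases z) auto
  have k: "mlow \<le> K" "mlow \<le> 1" "mlow \<le> d2" "mlow \<le> d3" unfolding mlow_def by auto
  have "mlow * (a - S0)^2 \<le> K * (a - S0)^2" using k by (intro mult_right_mono) auto
  moreover have "mlow * b^2 \<le> b^2" using k mult_right_mono[of mlow 1 "b^2"] by simp
  moreover have "mlow * c^2 \<le> d2 * c^2" using k by (intro mult_right_mono) auto
  moreover have "mlow * d^2 \<le> d3 * d^2" using k by (intro mult_right_mono) auto
  ultimately show "mlow * nsq z \<le> Wf z" unfolding z nsq_def Wf_def by (simp add: algebra_simps)
  have p: "K \<ge> 0" "d2 \<ge> 0" "d3 \<ge> 0" using consts_pos d_pos by auto
  have "K * (a - S0)^2 \<le> Mup * (a - S0)^2" unfolding Mup_def using p by (intro mult_right_mono) auto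
  moreover have "b^2 \<le> Mup * b^2" unfolding Mup_def using p mult_right_mono[of 1 Mup "b^2"] by (simp add: Mup_def)
  moreover have "d2 * c^2 \<le> Mup * c^2" unfolding Mup_def using p by (intro mult_right_mono) auto
  moreover have "d3 * d^2 \<le> Mup * d^2" unfolding Mup_def using p by (intro mult_right_mono) auto
  ultimately show "Wf z \<le> Mup * nsq z" unfolding z nsq_def Wf_def by (simp add: algebra_simps)
qed

lemma Wf_deriv:
  assumes "(x has_vector_derivative X) (at t within T)"
  shows "((\<lambda>t. Wf (x t)) has_real_derivative DW (x t) X) (at t within T)"
proof -
  have d1: "((\<lambda>t. fst (x t)) has_real_derivative fst X) (at t within T)"
    using vd_fst[OF assms] by (simp add: has_real_derivative_iff_has_vector_derivative)
  have d2: "((\<lambda>t. fst (snd (x t))) has_real_derivative fst (snd X)) (at t within T)"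
    using vd_fst[OF vd_snd[OF assms]] by (simp add: has_real_derivative_iff_has_vector_derivative)
  have d3: "((\<lambda>t. fst (snd (snd (x t)))) has_real_derivative fst (snd (snd X))) (at t within T)"
    using vd_fst[OF vd_snd[OF vd_snd[OF assms]]] by (simp add: has_real_derivative_iff_has_vector_derivative)
  have d4: "((\<lambda>t. snd (snd (snd (x t)))) has_real_derivative snd (snd (snd X))) (at t within T)"
    using vd_snd[OF vd_snd[OF vd_snd[OF assms]]] by (simp add: has_real_derivative_iff_has_vector_derivative)
  show ?thesis unfolding Wf_def DW_def
    by (rule derivative_eq_intros d1 d2 d3 d4 refl | simp)+
qed

lemma region:
  assumes "nsq z < rho^2"
  shows "DW z (hiv_field Q0 b1 b2 b3 c1 c2 c3 th p dl al mu u1 z) \<le> - cc * Wf z"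
proof -
  obtain S I1 I2 A where z: "z = (S,I1,I2,A)" by (cases z) auto
  have r: "rho > 0" using consts_pos by simp
  have sq: "(S - S0)^2 \<ge> 0" "I1^2 \<ge> 0" "I2^2 \<ge> 0" "A^2 \<ge> 0" by simp_all
  have n: "(S - S0)^2 + I1^2 + I2^2 + A^2 < rho^2" using assms unfolding z nsq_def by simp
  have lt: "\<bar>S - S0\<bar>^2 < rho^2" "\<bar>I1\<bar>^2 < rho^2" "\<bar>I2\<bar>^2 < rho^2" "\<bar>A\<bar>^2 < rho^2"
  proof -
    have "(S - S0)^2 < rho^2" "I1^2 < rho^2" "I2^2 < rho^2" "A^2 < rho^2" using n sq by linarith+
    thus "\<bar>S - S0\<bar>^2 < rho^2" "\<bar>I1\<bar>^2 < rho^2" "\<bar>I2\<bar>^2 < rho^2" "\<bar>A\<bar>^2 < rho^2" by simp_all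
  qed
  have "\<bar>S - S0\<bar> < rho" "\<bar>I1\<bar> < rho" "\<bar>I2\<bar> < rho" "\<bar>A\<bar> < rho"
    using power2_less_imp_less[OF lt(1)] power2_less_imp_less[OF lt(2)]
      power2_less_imp_less[OF lt(3)] power2_less_imp_less[OF lt(4)] r by auto
  thus ?thesis unfolding z by (rule core)
qed


lemma bound_lemma:
  assumes sol: "is_solution_on (hiv_field Q0 b1 b2 b3 c1 c2 c3 th p dl al mu u1) x {0..T}"
    and m: "m > 0" "m \<le> rho"
    and x0: "nsq (x 0) < (mlow/Mup) * m^2"
  shows "\<forall>t\<in>{0..T}. Wf (x t) \<le> Wf (x 0) * exp (- cc * t) \<and> Wf (x t) < mlow * m^2"
proof (rule decay_lemma[where D = "\<lambda>t. DW (x t) (hiv_field Q0 b1 b2 b3 c1 c2 c3 th p dl al mu u1 (x t))"])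
  fix t assume t: "t \<in> {0..T}"
  show "((\<lambda>t. Wf (x t)) has_real_derivative DW (x t) (hiv_field Q0 b1 b2 b3 c1 c2 c3 th p dl al mu u1 (x t)))
      (at t within {0..T})"
    using sol t unfolding is_solution_on_def by (intro Wf_deriv) auto
  assume lt: "Wf (x t) < mlow * m^2"
  have "mlow * nsq (x t) < mlow * m^2" using W_bounds(1)[of "x t"] lt by linarith
  hence "nsq (x t) < m^2" using m_pos by simp
  also have "m^2 \<le> rho^2" using m by (intro power_mono) auto
  finally show "DW (x t) (hiv_field Q0 b1 b2 b3 c1 c2 c3 th p dl al mu u1 (x t)) \<le> - cc * Wf (x t)"
    by (rule region)
next
  show "0 \<le> cc" using consts_pos by simp
  show "0 \<le> Wf (x 0)" using W_bounds(1)[of "x 0"] nsq_nn[of "x 0"] m_pos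
    by (meson mult_nonneg_nonneg less_imp_le order_trans)
  have "Wf (x 0) \<le> Mup * nsq (x 0)" by (rule W_bounds(2))
  also have "\<dots> < Mup * ((mlow/Mup) * m^2)" by (rule mult_strict_left_mono[OF x0]) (use m_pos in simp)
  also have "\<dots> = mlow * m^2" using m_pos by simp
  finally show "Wf (x 0) < mlow * m^2" .
qed

lemma init_bound:
  assumes "dist z (S0, 0, 0, 0) < sqrt (mlow/Mup) * m" "m > 0"
  shows "nsq z < (mlow/Mup) * m^2"
proof -
  have "sqrt (nsq z) < sqrt (mlow/Mup) * m" using assms dist_e by simp
  hence "(sqrt (nsq z))^2 < (sqrt (mlow/Mup) * m)^2"
    using nsq_nn[of z] by (intro power_strict_mono) auto
  thus ?thesis using nsq_nn[of z] m_pos by (simp add: power_mult_distrib)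
qed

lemma las: "locally_asymptotically_stable (hiv_field Q0 b1 b2 b3 c1 c2 c3 th p dl al mu u1) (S0, 0, 0, 0)"
  unfolding locally_asymptotically_stable_def
proof (intro conjI)
  show "hiv_field Q0 b1 b2 b3 c1 c2 c3 th p dl al mu u1 (S0, 0, 0, 0) = 0"
    unfolding hiv_field_def Let_def S0_def using pos by (simp add: zero_prod_def)
  have sq: "sqrt (mlow/Mup) > 0" using m_pos by simp
  show "\<forall>\<epsilon>>0. \<exists>\<delta>>0. \<forall>x T. is_solution_on (hiv_field Q0 b1 b2 b3 c1 c2 c3 th p dl al mu u1) x {0..T} \<and>
      dist (x 0) (S0, 0, 0, 0) < \<delta> \<longrightarrow> (\<forall>t\<in>{0..T}. dist (x t) (S0, 0, 0, 0) < \<epsilon>)"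
  proof (intro allI impI)
    fix eps :: real assume eps: "eps > 0"
    define m where "m = min eps rho"
    have m: "m > 0" "m \<le> rho" "m \<le> eps" unfolding m_def using eps consts_pos by auto
    show "\<exists>\<delta>>0. \<forall>x T. is_solution_on (hiv_field Q0 b1 b2 b3 c1 c2 c3 th p dl al mu u1) x {0..T} \<and>
      dist (x 0) (S0, 0, 0, 0) < \<delta> \<longrightarrow> (\<forall>t\<in>{0..T}. dist (x t) (S0, 0, 0, 0) < eps)"
    proof (intro exI[of _ "sqrt (mlow/Mup) * m"] conjI allI impI ballI)
      show "sqrt (mlow/Mup) * m > 0" using sq m by simp
      fix x T t
      assume h: "is_solution_on (hiv_field Q0 b1 b2 b3 c1 c2 c3 th p dl al mu u1) x {0..T} \<and>
          dist (x 0) (S0, 0, 0, 0) < sqrt (mlow/Mup) * m"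
        and t: "t \<in> {0..T}"
      have "Wf (x t) < mlow * m^2"
        using bound_lemma[of x T m] h m init_bound[of "x 0" m] t by blast
      hence "mlow * nsq (x t) < mlow * m^2" using W_bounds(1)[of "x t"] by linarith
      hence "nsq (x t) < m^2" using m_pos by simp
      also have "m^2 \<le> eps^2" using m by (intro power_mono) auto
      finally have "sqrt (nsq (x t)) < sqrt (eps^2)" by (rule real_sqrt_less_mono)
      thus "dist (x t) (S0, 0, 0, 0) < eps" using eps dist_e by simp
    qed
  qed
  show "\<exists>\<eta>>0. \<forall>x. is_solution_on (hiv_field Q0 b1 b2 b3 c1 c2 c3 th p dl al mu u1) x {0..} \<and>
      dist (x 0) (S0, 0, 0, 0) < \<eta> \<longrightarrow> (x \<longlongrightarrow> (S0, 0, 0, 0)) at_top"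
  proof (intro exI[of _ "sqrt (mlow/Mup) * rho"] conjI allI impI)
    show "sqrt (mlow/Mup) * rho > 0" using sq consts_pos by simp
    fix x assume h: "is_solution_on (hiv_field Q0 b1 b2 b3 c1 c2 c3 th p dl al mu u1) x {0..} \<and>
          dist (x 0) (S0, 0, 0, 0) < sqrt (mlow/Mup) * rho"
    have x0: "nsq (x 0) < (mlow/Mup) * rho^2" using init_bound[of "x 0" rho] h consts_pos by blast
    have bnd: "Wf (x t) \<le> Wf (x 0) * exp (- cc * t)" if t: "t \<ge> 0" for t
    proof -
      have "is_solution_on (hiv_field Q0 b1 b2 b3 c1 c2 c3 th p dl al mu u1) x {0..t}"
        using h unfolding is_solution_on_def
        by (auto intro: has_vector_derivative_within_subset[where S="{0..}"])
      from bound_lemma[OF this _ _ x0] consts_pos t show ?thesis by auto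
    qed
    define h0 where "h0 = Wf (x 0) / mlow"
    have "((\<lambda>t. sqrt (h0 * exp (- cc * t))) \<longlongrightarrow> sqrt (h0 * 0)) at_top"
      by (intro tendsto_intros exp_decay_lim consts_pos)
    hence lim: "((\<lambda>t. sqrt (h0 * exp (- cc * t))) \<longlongrightarrow> 0) at_top" by simp
    have ev: "eventually (\<lambda>t. dist (x t) (S0, 0, 0, 0) \<le> sqrt (h0 * exp (- cc * t))) at_top"
      unfolding eventually_at_top_linorder
    proof (intro exI[of _ 0] allI impI)
      fix t :: real assume t: "t \<ge> 0"
      have "mlow * nsq (x t) \<le> Wf (x 0) * exp (- cc * t)" using W_bounds(1)[of "x t"] bnd[OF t] by linarith
      hence "nsq (x t) \<le> h0 * exp (- cc * t)" unfolding h0_def using m_pos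
        by (simp add: field_simps)
      thus "dist (x t) (S0, 0, 0, 0) \<le> sqrt (h0 * exp (- cc * t))" using dist_e by simp
    qed
    have "((\<lambda>t. dist (x t) (S0, 0, 0, 0)) \<longlongrightarrow> 0) at_top"
      by (rule tendsto_sandwich[OF _ ev tendsto_const lim]) simp
    thus "(x \<longlongrightarrow> (S0, 0, 0, 0)) at_top" by (rule tendsto_dist_iff[THEN iffD2])
  qed
qed

end

theorem theorem4:
  fixes Q0 b1 b2 b3 c1 c2 c3 th p dl al mu u1 :: real
  assumes pos: "Q0 > 0" "b1 > 0" "b2 > 0" "b3 > 0" "c1 > 0" "c2 > 0" "c3 > 0"
      "th > 0" "p > 0" "dl > 0" "al > 0" "mu > 0"
    and u1: "0 \<le> u1" "u1 \<le> 1"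
    and R0: "(1 - u1) * b1 * c1 / (th + dl + mu)
           + (1 - u1) * b2 * c2 * th / ((th + dl + mu) * (dl + mu + p))
           + (1 - u1) * b3 * c3 * th * (dl + p) / ((th + dl + mu) * (dl + mu + p) * (al + mu))
           + (1 - u1) * b3 * c3 * dl / ((th + dl + mu) * (al + mu)) < 1"
  shows "locally_asymptotically_stable (hiv_field Q0 b1 b2 b3 c1 c2 c3 th p dl al mu u1)
           (Q0 / mu, 0, 0, 0)"
proof -
  interpret hivp Q0 b1 b2 b3 c1 c2 c3 th p dl al mu u1
    using pos u1 R0 by unfold_locales auto
  show ?thesis using las unfolding S0_def .
qed

end
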